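(* Let $\mathcal A=(Q,\Sigma,\delta,\rho)$ be a connected bireversible Mealy automaton whose labeled orbit tree $\mathfrak t(\mathcal A)$ has no active self-liftable branch, and let $\mathfrak j$ be a jungle tree with trunk of length $n$. For a $\mathfrak j$-word $\mathbf u$ with $|\mathbf u|<n$ and a $\sim$-class $\gamma$ of stems, let $M(\mathbf u,\gamma)$ be the number of stems in $\gamma$ with prefix $\mathbf u$. Then $M(\mathbf u,\gamma)$ is either $0$ or depends only on $|\mathbf u|$: if $M(\mathbf u,\gamma)\ne0$, $M(\mathbf u',\gamma')\neq 0$ and $|\mathbf u|=|\mathbf u'|$, then $M(\mathbf u,\gamma)=M(\mathbf u',\gamma')$.
   Context: Mealy automata. A Mealy automaton is $\mathcal A=(Q,\Sigma,\delta,\rho)$ with $Q,\Sigma$ finite non-empty sets, $\delta=(\delta_i\colon Q\to Q)_{i\in\Sigma}$, $\rho=(\rho_x\colon\Sigma\to\Sigma)_{x\in Q}$; transitions $x\xrightarrow{i\mid\rho_x(i)}\delta_i(x)$. Invertible: each $\rho_x$ a permutation of $\Sigma$; reversible: each $\delta_i$ a permutation of $Q$; bireversible: invertible, reversible, and for each $j\in\Sigma$ the map $x\mapsto\delta_{\rho_x^{-1}(j)}(x)$ is a permutation of $Q$. Connected: the directed graph on $Q$ with edges $x\to\delta_i(x)$ is connected. Extensions: $\rho_x(i\mathbf s)=\rho_x(i)\rho_{\delta_i(x)}(\mathbf s)$; $\rho_{x_1\cdots x_m}=\rho_{x_m}\circ\cdots\circ\rho_{x_1}$; $\delta_i(x\mathbf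 u)=\delta_i(x)\delta_{\rho_x(i)}(\mathbf u)$ on $Q^*$, $\delta_{i_1\cdots i_m}=\delta_{i_m}\circ\cdots\circ\delta_{i_1}$. The connected components of $\mathcal A^n$ (stateset $Q^n$, transitions $\mathbf u\xrightarrow{i\mid\rho_{\mathbf u}(i)}\delta_i(\mathbf u)$) are, for reversible $\mathcal A$, the orbits of $Q^n$ under the maps $\delta_{\mathbf s}$. Orbit tree $\mathfrak t(\mathcal A)$: vertices at level $n\ge0$ are the connected components of $\mathcal A^n$; an edge from the component of $\mathbf u\in Q^n$ to that of $\mathbf ux$ for all $\mathbf u,x$; edge $C\to D$ labeled $\#D/\#C$. $\top,\bot$ = first/last vertex of a downward path; level of an edge/path = level of its top vertex. A word of $Q^*\cup Q^\omega$ represents the initial path through the components of its prefixes. Edge $e$ is liftable to $f$ if every word of $\bot(e)$ has a suffix in $\bot(f)$; paths are liftable if corresponding edges are. $f$ is a legitimate child of $e$ if $\top(f)=\bot(e)$ and $f$ is liftable to $e$. A path/subtree $\mathfrak s$ is $k$-self-liftable if for all $i\ge0$ every path in $\mathfrak s$ starting at level $i+k$ is liftable to a path in $\mathfrak s$ starting at level $i$; self-liftable if $k$-self-liftable for some $k>0$. A branch (infinite initial path) is active if its labels are not eventually all $1$. Jungle trees: for a finite 1-self-liftable initial path $\mathbf e$ of length $n$ whose last edge has at least two legitimate children, all labeled $1$, $\mathfrak j(\mathbf e)$ consists of $\mathbf e$ plus all edges descending from $\bot(\mathbf e)$ that are liftable to the last edge of $\mathbf e$. Stems: the words of $\bot(\mathbf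 e)\subseteq Q^n$. A $\mathfrak j$-word is a word representing an initial path of $\mathfrak j$. For stems $\mathbf u,\mathbf v$: $\mathbf u\sim\mathbf v$ iff there is $\mathbf s\in Q^*$ such that $\mathbf{usv}$ is a $\mathfrak j$-word and $\rho_{\mathbf{us}}$ is the identity of $\Sigma^*$; $\sim$ is an equivalence relation. *)

theory Defs
  imports Complex_Main "HOL-Library.Sublist"
begin

text \<open>A Mealy automaton (Q, Sigma, delta, rho) with finite non-empty stateset Q = UNIV :: 'q set
  and alphabet Sigma = UNIV :: 's set.  delta i x is the target of the transition from x
  reading i; rho x i is its output.\<close>

definition invertible :: "('s \<Rightarrow> 'q \<Rightarrow> 'q) \<Rightarrow> ('q \<Rightarrow> 's \<Rightarrow> 's) \<Rightarrow> bool" where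
  "invertible delta rho \<longleftrightarrow> (\<forall>x. bij (rho x))"

definition reversible :: "('s \<Rightarrow> 'q \<Rightarrow> 'q) \<Rightarrow> ('q \<Rightarrow> 's \<Rightarrow> 's) \<Rightarrow> bool" where
  "reversible delta rho \<longleftrightarrow> (\<forall>i. bij (delta i))"

definition bireversible :: "('s \<Rightarrow> 'q \<Rightarrow> 'q) \<Rightarrow> ('q \<Rightarrow> 's \<Rightarrow> 's) \<Rightarrow> bool" where
  "bireversible delta rho \<longleftrightarrow> invertible delta rho \<and> reversible delta rho \<and>
     (\<forall>j. bij (\<lambda>x. delta (inv (rho x) j) x))"

definition connected_automaton :: "('s \<Rightarrow> 'q \<Rightarrow> 'q) \<Rightarrow> ('q \<Rightarrow> 's \<Rightarrow> 's) \<Rightarrow> bool" where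
  "connected_automaton delta rho \<longleftrightarrow>
     (let E = {(x, delta i x) | x i. True} in \<forall>x y. (x, y) \<in> (E \<union> E\<inverse>)\<^sup>*)"

fun rho_word :: "('s \<Rightarrow> 'q \<Rightarrow> 'q) \<Rightarrow> ('q \<Rightarrow> 's \<Rightarrow> 's) \<Rightarrow> 'q \<Rightarrow> 's list \<Rightarrow> 's list" where
  "rho_word delta rho x [] = []"
| "rho_word delta rho x (i # s) = rho x i # rho_word delta rho (delta i x) s"

fun rho_states :: "('s \<Rightarrow> 'q \<Rightarrow> 'q) \<Rightarrow> ('q \<Rightarrow> 's \<Rightarrow> 's) \<Rightarrow> 'q list \<Rightarrow> 's list \<Rightarrow> 's list" where
  "rho_states delta rho [] s = s"
| "rho_states delta rho (x # u) s = rho_states delta rho u (rho_word delta rho x s)"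

fun delta_word :: "('s \<Rightarrow> 'q \<Rightarrow> 'q) \<Rightarrow> ('q \<Rightarrow> 's \<Rightarrow> 's) \<Rightarrow> 's \<Rightarrow> 'q list \<Rightarrow> 'q list" where
  "delta_word delta rho i [] = []"
| "delta_word delta rho i (x # u) = delta i x # delta_word delta rho (rho x i) u"

definition comp :: "('s \<Rightarrow> 'q \<Rightarrow> 'q) \<Rightarrow> ('q \<Rightarrow> 's \<Rightarrow> 's) \<Rightarrow> 'q list \<Rightarrow> 'q list set" where
  "comp delta rho u =
     (let R = {(v, delta_word delta rho i v) | v i. True} in {v. (u, v) \<in> (R \<union> R\<inverse>)\<^sup>*})"

text \<open>Vertices of the orbit tree: the connected components of all A^n.\<close>
definition is_vertex :: "('s \<Rightarrow> 'q \<Rightarrow> 'q) \<Rightarrow> ('q \<Rightarrow> 's \<Rightarrow> 's) \<Rightarrow> 'q list set \<Rightarrow> bool" where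
  "is_vertex delta rho C \<longleftrightarrow> (\<exists>u. C = comp delta rho u)"

definition lev :: "'q list set \<Rightarrow> nat" where
  "lev C = length (SOME w. w \<in> C)"

text \<open>Edges of the orbit tree are identified with their bottom vertex, which is any vertex
  at level \<ge> 1; the top vertex of the edge is the component of the prefixes of length n-1.\<close>
definition is_edge :: "('s \<Rightarrow> 'q \<Rightarrow> 'q) \<Rightarrow> ('q \<Rightarrow> 's \<Rightarrow> 's) \<Rightarrow> 'q list set \<Rightarrow> bool" where
  "is_edge delta rho D \<longleftrightarrow> is_vertex delta rho D \<and> [] \<notin> D"

definition top_of :: "('s \<Rightarrow> 'q \<Rightarrow> 'q) \<Rightarrow> ('q \<Rightarrow> 's \<Rightarrow> 's) \<Rightarrow> 'q list set \<Rightarrow> 'q list set" where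
  "top_of delta rho D = comp delta rho (butlast (SOME w. w \<in> D))"

definition label :: "('s \<Rightarrow> 'q \<Rightarrow> 'q) \<Rightarrow> ('q \<Rightarrow> 's \<Rightarrow> 's) \<Rightarrow> 'q list set \<Rightarrow> rat" where
  "label delta rho D = of_nat (card D) / of_nat (card (top_of delta rho D))"

definition liftable :: "'q list set \<Rightarrow> 'q list set \<Rightarrow> bool" where
  "liftable D F \<longleftrightarrow> (\<forall>w\<in>D. \<exists>s. suffix s w \<and> s \<in> F)"

text \<open>A (non-empty, finite, downward) path, as the list of its edges, contained in the edge set S,
  starting at level i (the level of its top vertex).\<close>
definition path_in :: "('s \<Rightarrow> 'q \<Rightarrow> 'q) \<Rightarrow> ('q \<Rightarrow> 's \<Rightarrow> 's) \<Rightarrow> 'q list set set \<Rightarrow> nat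
    \<Rightarrow> 'q list set list \<Rightarrow> bool" where
  "path_in delta rho S i ps \<longleftrightarrow> ps \<noteq> [] \<and> set ps \<subseteq> S \<and>
     (\<forall>D\<in>set ps. is_edge delta rho D) \<and>
     (\<forall>t. Suc t < length ps \<longrightarrow> top_of delta rho (ps ! Suc t) = ps ! t) \<and>
     lev (top_of delta rho (hd ps)) = i"

definition liftable_path :: "'q list set list \<Rightarrow> 'q list set list \<Rightarrow> bool" where
  "liftable_path ps qs \<longleftrightarrow> length ps = length qs \<and> (\<forall>t<length ps. liftable (ps ! t) (qs ! t))"

definition k_self_liftable :: "('s \<Rightarrow> 'q \<Rightarrow> 'q) \<Rightarrow> ('q \<Rightarrow> 's \<Rightarrow> 's) \<Rightarrow> nat
    \<Rightarrow> 'q list set set \<Rightarrow> bool" where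
  "k_self_liftable delta rho k S \<longleftrightarrow>
     (\<forall>i ps. path_in delta rho S (i + k) ps \<longrightarrow>
        (\<exists>qs. path_in delta rho S i qs \<and> liftable_path ps qs))"

definition self_liftable :: "('s \<Rightarrow> 'q \<Rightarrow> 'q) \<Rightarrow> ('q \<Rightarrow> 's \<Rightarrow> 's) \<Rightarrow> 'q list set set \<Rightarrow> bool" where
  "self_liftable delta rho S \<longleftrightarrow> (\<exists>k>0. k_self_liftable delta rho k S)"

definition is_branch :: "('s \<Rightarrow> 'q \<Rightarrow> 'q) \<Rightarrow> ('q \<Rightarrow> 's \<Rightarrow> 's) \<Rightarrow> (nat \<Rightarrow> 'q list set) \<Rightarrow> bool" where
  "is_branch delta rho B \<longleftrightarrow> B 0 = comp delta rho [] \<and>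
     (\<forall>n. is_edge delta rho (B (Suc n)) \<and> top_of delta rho (B (Suc n)) = B n)"

definition branch_edges :: "(nat \<Rightarrow> 'q list set) \<Rightarrow> 'q list set set" where
  "branch_edges B = range (\<lambda>n. B (Suc n))"

definition active_branch :: "('s \<Rightarrow> 'q \<Rightarrow> 'q) \<Rightarrow> ('q \<Rightarrow> 's \<Rightarrow> 's) \<Rightarrow> (nat \<Rightarrow> 'q list set) \<Rightarrow> bool" where
  "active_branch delta rho B \<longleftrightarrow> \<not> (\<forall>\<^sub>F n in sequentially. label delta rho (B (Suc n)) = 1)"

definition legitimate_child :: "('s \<Rightarrow> 'q \<Rightarrow> 'q) \<Rightarrow> ('q \<Rightarrow> 's \<Rightarrow> 's) \<Rightarrow> 'q list set
    \<Rightarrow> 'q list set \<Rightarrow> bool" where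
  "legitimate_child delta rho F E \<longleftrightarrow> is_edge delta rho F \<and> top_of delta rho F = E \<and> liftable F E"

definition jungle_trunk :: "('s \<Rightarrow> 'q \<Rightarrow> 'q) \<Rightarrow> ('q \<Rightarrow> 's \<Rightarrow> 's) \<Rightarrow> 'q list set list \<Rightarrow> bool" where
  "jungle_trunk delta rho es \<longleftrightarrow>
     path_in delta rho (set es) 0 es \<and> k_self_liftable delta rho 1 (set es) \<and>
     (\<exists>F1 F2. F1 \<noteq> F2 \<and> legitimate_child delta rho F1 (last es) \<and>
               legitimate_child delta rho F2 (last es)) \<and>
     (\<forall>F. legitimate_child delta rho F (last es) \<longrightarrow> label delta rho F = 1)"

definition descends :: "'q list set \<Rightarrow> 'q list set \<Rightarrow> bool" where
  "descends F C \<longleftrightarrow> (\<exists>w\<in>F. length w > lev C \<and> take (lev C) w \<in> C)"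

definition jungle :: "('s \<Rightarrow> 'q \<Rightarrow> 'q) \<Rightarrow> ('q \<Rightarrow> 's \<Rightarrow> 's) \<Rightarrow> 'q list set list \<Rightarrow> 'q list set set" where
  "jungle delta rho es = set es \<union>
     {F. is_edge delta rho F \<and> descends F (last es) \<and> liftable F (last es)}"

text \<open>A j-word: a finite word representing an initial path of j.\<close>
definition jword :: "('s \<Rightarrow> 'q \<Rightarrow> 'q) \<Rightarrow> ('q \<Rightarrow> 's \<Rightarrow> 's) \<Rightarrow> 'q list set list \<Rightarrow> 'q list \<Rightarrow> bool" where
  "jword delta rho es w \<longleftrightarrow>
     (\<forall>k. 1 \<le> k \<and> k \<le> length w \<longrightarrow> comp delta rho (take k w) \<in> jungle delta rho es)"

definition stems :: "'q list set list \<Rightarrow> 'q list set" where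
  "stems es = last es"

definition stem_rel :: "('s \<Rightarrow> 'q \<Rightarrow> 'q) \<Rightarrow> ('q \<Rightarrow> 's \<Rightarrow> 's) \<Rightarrow> 'q list set list
    \<Rightarrow> ('q list \<times> 'q list) set" where
  "stem_rel delta rho es = {(u, v). u \<in> stems es \<and> v \<in> stems es \<and>
     (\<exists>s. jword delta rho es (u @ s @ v) \<and> (\<forall>t. rho_states delta rho (u @ s) t = t))}"

definition M_count :: "'q list \<Rightarrow> 'q list set \<Rightarrow> nat" where
  "M_count u \<gamma> = card {v \<in> \<gamma>. prefix u v}"

end

theory Submission
  imports Defs "HOL-Library.FuncSet"
begin

fun dw :: "('s \<Rightarrow> 'q \<Rightarrow> 'q) \<Rightarrow> ('q \<Rightarrow> 's \<Rightarrow> 's) \<Rightarrow> 's list \<Rightarrow> 'q list \<Rightarrow> 'q list" where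
  "dw d r [] w = w"
| "dw d r (i # s) w = dw d r s (delta_word d r i w)"

definition rl :: "('q \<Rightarrow> 's \<Rightarrow> 's) \<Rightarrow> 'q list \<Rightarrow> 's \<Rightarrow> 's" where
  "rl r x i = foldl (\<lambda>i q. r q i) i x"

lemma length_delta_word[simp]: "length (delta_word d r i w) = length w"
  by (induction w arbitrary: i) auto

lemma length_dw[simp]: "length (dw d r s w) = length w"
  by (induction s arbitrary: w) auto

lemma dw_Nil_word[simp]: "dw d r s [] = []"
  by (induction s) auto

lemma delta_word_append: "delta_word d r i (x @ y) = delta_word d r i x @ delta_word d r (rl r x i) y"
  by (induction x arbitrary: i) (auto simp: rl_def)

lemma rho_states_cons: "rho_states d r x (i # t) = rl r x i # rho_states d r (delta_word d r i x) t"
  by (induction x arbitrary: i t) (auto simp: rl_def)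

lemma rho_states_append: "rho_states d r (a @ b) t = rho_states d r b (rho_states d r a t)"
  by (induction a arbitrary: t) auto

lemma rho_states_Nil[simp]: "rho_states d r x [] = []"
  by (induction x) auto

lemma dw_append_word: "dw d r s (x @ y) = dw d r s x @ dw d r (rho_states d r x s) y"
  by (induction s arbitrary: x y) (auto simp: delta_word_append rho_states_cons)

lemma dw_append_letters: "dw d r (s @ t) w = dw d r t (dw d r s w)"
  by (induction s arbitrary: w) auto

lemma rho_id_delta: assumes "\<forall>t. rho_states d r x t = t" shows "\<forall>t. rho_states d r (delta_word d r i x) t = t"
proof
  fix t have "rho_states d r x (i # t) = i # t" using assms by blast
  thus "rho_states d r (delta_word d r i x) t = t" by (simp add: rho_states_cons)
qed

lemma rho_id_dw: "\<forall>t. rho_states d r x t = t \<Longrightarrow> \<forall>t. rho_states d r (dw d r s x) t = t"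
  by (induction s arbitrary: x) (auto dest: rho_id_delta)

lemma take_dw: "take k (dw d r s w) = dw d r s (take k w)"
proof -
  have "dw d r s w = dw d r s (take k w) @ dw d r (rho_states d r (take k w) s) (drop k w)"
    by (metis append_take_drop_id dw_append_word)
  hence "take k (dw d r s w) = take k (dw d r s (take k w) @ dw d r (rho_states d r (take k w) s) (drop k w))" by simp
  also have "\<dots> = dw d r s (take k w)"
    by (cases "k \<le> length w") (auto simp: min_def)
  finally show ?thesis .
qed

lemma inj_delta_word: assumes "\<And>i. inj (d i)" shows "inj (delta_word d r i)"
proof -
  have "delta_word d r i x = delta_word d r i y \<Longrightarrow> x = y" for x y
  proof (induction x arbitrary: y i)
    case Nil then show ?case by (cases y) auto
  next
    case (Cons a x) then show ?case using assms by (cases y) (auto dest: injD)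
  qed
  thus ?thesis by (auto intro: injI)
qed

lemma inj_dw: assumes "\<And>i. inj (d i)" shows "inj (dw d r s)"
proof (induction s)
  case Nil then show ?case by (simp add: inj_on_def)
next
  case (Cons i s)
  have "dw d r (i # s) = dw d r s \<circ> delta_word d r i" by auto
  have "inj (delta_word d r i)" by (rule inj_delta_word) (rule assms)
  then show ?case using Cons by (metis \<open>dw d r (i # s) = _\<close> inj_compose)
qed

lemma finite_order:
  fixes f :: "'a \<Rightarrow> 'a"
  assumes "inj f" "f ` A \<subseteq> A" "finite A"
  shows "\<exists>N>0. \<forall>w\<in>A. (f ^^ N) w = w"
proof -
  let ?g = "\<lambda>k. restrict (f ^^ k) A"
  have fA: "(f ^^ k) w \<in> A" if "w \<in> A" for k w using that assms(2) by (induction k) auto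
  have "range ?g \<subseteq> Pi\<^sub>E A (\<lambda>_. A)" using fA by auto
  moreover have "finite (Pi\<^sub>E A (\<lambda>_. A))" using assms(3) by (simp add: finite_PiE)
  ultimately have "finite (range ?g)" by (rule finite_subset)
  hence "\<not> inj ?g" using finite_imageD infinite_UNIV_nat by blast
  then obtain a b where ab: "a \<noteq> b" "?g a = ?g b" by (auto simp: inj_def)
  then obtain a b where ab: "a < b" "?g a = ?g b" by (metis linorder_neqE_nat)
  have injk: "inj (f ^^ k)" for k using assms(1) by (simp add: inj_fn)
  show ?thesis
  proof (intro exI[of _ "b - a"] conjI ballI)
    show "0 < b - a" using ab by simp
    fix w assume w: "w \<in> A"
    have "(f ^^ a) ((f ^^ (b - a)) w) = (f ^^ b) w"
      using ab(1) by (metis funpow_add le_add_diff_inverse less_imp_le o_apply)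
    also have "\<dots> = (f ^^ a) w" using ab(2) w by (metis restrict_apply')
    finally show "(f ^^ (b - a)) w = w" using injk by (auto dest: injD)
  qed
qed

definition Rel :: "('s \<Rightarrow> 'q \<Rightarrow> 'q) \<Rightarrow> ('q \<Rightarrow> 's \<Rightarrow> 's) \<Rightarrow> ('q list \<times> 'q list) set" where
  "Rel d r = {(v, delta_word d r i v) | v i. True}"

lemma comp_eq: "comp d r u = {v. (u, v) \<in> (Rel d r \<union> (Rel d r)\<inverse>)\<^sup>*}"
  by (simp add: comp_def Rel_def Let_def)

lemma comp_self: "u \<in> comp d r u"
  by (simp add: comp_eq)

lemma dw_rtrancl: "(u, dw d r s u) \<in> (Rel d r \<union> (Rel d r)\<inverse>)\<^sup>*"
proof (induction s arbitrary: u)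
  case Nil then show ?case by simp
next
  case (Cons i s)
  have "(u, delta_word d r i u) \<in> Rel d r \<union> (Rel d r)\<inverse>" by (auto simp: Rel_def)
  then show ?case using Cons[of "delta_word d r i u"] by (simp add: converse_rtrancl_into_rtrancl)
qed

lemma dw_in_comp: "dw d r s u \<in> comp d r u"
  using dw_rtrancl by (simp add: comp_eq)

lemma comp_trans: assumes "v \<in> comp d r u" shows "comp d r v = comp d r u"
proof -
  let ?S = "Rel d r \<union> (Rel d r)\<inverse>"
  have "sym ?S" by (auto simp: sym_def)
  hence s: "sym (?S\<^sup>*)" by (rule sym_rtrancl)
  have uv: "(u, v) \<in> ?S\<^sup>*" using assms by (simp add: comp_eq)
  hence vu: "(v, u) \<in> ?S\<^sup>*" using s by (meson symD)
  show ?thesis unfolding comp_eq using uv vu by (auto intro: rtrancl_trans)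
qed

lemma length_comp: assumes "v \<in> comp d r u" shows "length v = length u"
proof -
  have "(u, v) \<in> (Rel d r \<union> (Rel d r)\<inverse>)\<^sup>*" using assms by (simp add: comp_eq)
  thus ?thesis by (induction rule: rtrancl_induct) (auto simp: Rel_def)
qed

lemma comp_dw_closed: "u \<in> comp d r w \<Longrightarrow> dw d r s u \<in> comp d r w"
  by (metis comp_trans dw_in_comp)

lemma dw_replicate: "dw d r (replicate m i) w = (delta_word d r i ^^ m) w"
  by (induction m arbitrary: w) (auto simp: funpow_swap1)

lemma comp_dw_rev:
  fixes d :: "'s \<Rightarrow> 'q::finite \<Rightarrow> 'q"
  assumes inj: "\<And>i. inj (d i)" and v: "v \<in> comp d r u"
  shows "\<exists>s. v = dw d r s u"
proof -
  have "(u, v) \<in> (Rel d r \<union> (Rel d r)\<inverse>)\<^sup>*" using v by (simp add: comp_eq)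
  thus ?thesis
  proof (induction rule: rtrancl_induct)
    case base then show ?case by (metis dw.simps(1))
  next
    case (step v z)
    then obtain s where s: "v = dw d r s u" by blast
    from step(2) show ?case
    proof
      assume "(v, z) \<in> Rel d r"
      then obtain i where "z = delta_word d r i v" by (auto simp: Rel_def)
      hence "z = dw d r (s @ [i]) u" using s by (simp add: dw_append_letters)
      thus ?thesis by blast
    next
      assume "(v, z) \<in> (Rel d r)\<inverse>"
      then obtain i where vz: "v = delta_word d r i z" by (auto simp: Rel_def)
      let ?f = "delta_word d r i" and ?A = "{w :: 'q list. length w = length z}"
      have fin: "finite ?A" using finite_lists_length_eq[OF finite_UNIV, of "length z"] by simp
      have "inj ?f" by (rule inj_delta_word) (rule inj)
      moreover have "?f ` ?A \<subseteq> ?A" by auto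
      ultimately obtain N where N: "N > 0" "\<forall>w\<in>?A. (?f ^^ N) w = w"
        using finite_order fin by blast
      have "z = (?f ^^ N) z" using N by simp
      also have "\<dots> = (?f ^^ (N - 1)) (?f z)" using N(1)
        by (metis Suc_diff_1 funpow_simps_right(2) o_apply)
      also have "\<dots> = dw d r (s @ replicate (N - 1) i) u"
        using vz s by (simp add: dw_append_letters dw_replicate)
      finally show ?thesis by blast
    qed
  qed
qed

lemma lev_comp: "lev (comp d r w) = length w"
proof -
  have "(SOME x. x \<in> comp d r w) \<in> comp d r w" using comp_self by (metis someI)
  thus ?thesis by (simp add: lev_def length_comp)
qed

lemma lev_top: assumes "is_edge d r D" shows "lev (top_of d r D) = lev D - 1" "lev D \<ge> 1"
proof -
  obtain w where D: "D = comp d r w" using assms by (auto simp: is_edge_def is_vertex_def)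
  have x: "(SOME x. x \<in> D) \<in> D" using comp_self D by (metis someI)
  show "lev (top_of d r D) = lev D - 1"
    using x D by (simp add: top_of_def lev_comp length_comp)
  have "w \<noteq> []" using assms D comp_self by (auto simp: is_edge_def)
  thus "lev D \<ge> 1" using D by (simp add: lev_comp Suc_le_eq)
qed

lemma path_lev: assumes "path_in d r S 0 es" shows "t < length es \<Longrightarrow> lev (es ! t) = Suc t"
proof (induction t)
  case 0
  have ne: "es \<noteq> []" using assms by (simp add: path_in_def)
  hence "es ! 0 \<in> set es" by simp
  hence e: "is_edge d r (es ! 0)" using assms by (auto simp: path_in_def)
  have "lev (top_of d r (es ! 0)) = 0" using assms ne by (simp add: path_in_def hd_conv_nth)
  then show ?case using lev_top[OF e] by simp
next
  case (Suc t)
  have "es ! Suc t \<in> set es" using Suc by simp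
  hence e: "is_edge d r (es ! Suc t)" using assms by (auto simp: path_in_def)
  have "top_of d r (es ! Suc t) = es ! t" using assms Suc by (simp add: path_in_def)
  then show ?case using lev_top[OF e] Suc by simp
qed

locale ctx =
  fixes d :: "'s::finite \<Rightarrow> 'q::finite \<Rightarrow> 'q" and r :: "'q \<Rightarrow> 's \<Rightarrow> 's" and es :: "'q list set list"
  assumes rev: "reversible d r" and trunk: "jungle_trunk d r es"
begin

lemma inj_d: "inj (d i)" using rev by (simp add: reversible_def bij_is_inj)

lemma pth: "path_in d r (set es) 0 es" using trunk by (simp add: jungle_trunk_def)

lemma es_ne: "es \<noteq> []" using pth by (simp add: path_in_def)

lemma es_edge: "D \<in> set es \<Longrightarrow> is_edge d r D" using pth by (auto simp: path_in_def)

lemma es_words: assumes "D \<in> set es" "w \<in> D" shows "length w \<le> length es"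
proof -
  obtain t where t: "t < length es" "D = es ! t" using assms(1) by (metis in_set_conv_nth)
  obtain x where x: "D = comp d r x" using es_edge[OF assms(1)] by (auto simp: is_edge_def is_vertex_def)
  have "lev D = Suc t" using path_lev[OF pth t(1)] t by simp
  hence "length x = Suc t" using x by (simp add: lev_comp)
  moreover have "length w = length x" using assms(2) x length_comp by blast
  ultimately show ?thesis using t by simp
qed

lemma last_lev: "lev (last es) = length es"
  using path_lev[OF pth, of "length es - 1"] es_ne by (simp add: last_conv_nth)

lemma last_comp: obtains w0 where "last es = comp d r w0" "length w0 = length es"
proof -
  have "last es \<in> set es" using es_ne by simp
  then obtain w0 where w0: "last es = comp d r w0" using es_edge by (auto simp: is_edge_def is_vertex_def)
  hence "length w0 = length es" using last_lev by (simp add: lev_comp)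
  thus ?thesis using that w0 by blast
qed

lemma stem_len: "a \<in> stems es \<Longrightarrow> length a = length es"
proof -
  assume a: "a \<in> stems es"
  obtain w0 where "last es = comp d r w0" "length w0 = length es" by (rule last_comp)
  thus ?thesis using a length_comp[of a d r w0] by (simp add: stems_def)
qed

lemma stem_dw: "a \<in> stems es \<Longrightarrow> dw d r s a \<in> stems es"
proof -
  assume a: "a \<in> stems es"
  obtain w0 where "last es = comp d r w0" "length w0 = length es" by (rule last_comp)
  thus ?thesis using a comp_dw_closed by (simp add: stems_def)
qed

lemma stem_reach: "a \<in> stems es \<Longrightarrow> b \<in> stems es \<Longrightarrow> \<exists>s. b = dw d r s a"
proof -
  assume a: "a \<in> stems es" and b: "b \<in> stems es"
  obtain w0 where w0: "last es = comp d r w0" by (rule last_comp)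
  have "comp d r a = comp d r w0" using a w0 comp_trans by (simp add: stems_def)
  hence "b \<in> comp d r a" using b w0 by (simp add: stems_def)
  thus ?thesis using comp_dw_rev inj_d by blast
qed

lemma comp_dw_eq: "comp d r (dw d r s x) = comp d r x"
  by (rule comp_trans) (rule dw_in_comp)

lemma jword_dw: assumes "jword d r es w" shows "jword d r es (dw d r s w)"
  unfolding jword_def
proof (intro allI impI)
  fix k assume k: "1 \<le> k \<and> k \<le> length (dw d r s w)"
  have "comp d r (take k w) \<in> jungle d r es" using assms k by (simp add: jword_def)
  thus "comp d r (take k (dw d r s w)) \<in> jungle d r es" by (simp add: take_dw comp_dw_eq)
qed

lemma R_inv: assumes "(a, b) \<in> stem_rel d r es" shows "(dw d r s a, dw d r s b) \<in> stem_rel d r es"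
proof -
  from assms obtain t where a: "a \<in> stems es" and b: "b \<in> stems es"
    and j: "jword d r es (a @ t @ b)" and rid: "\<forall>x. rho_states d r (a @ t) x = x"
    by (auto simp: stem_rel_def)
  let ?t = "dw d r (rho_states d r a s) t"
  have e1: "dw d r s (a @ t) = dw d r s a @ ?t" by (simp add: dw_append_word)
  have "dw d r s ((a @ t) @ b) = dw d r s (a @ t) @ dw d r s b"
    using rid by (simp only: dw_append_word)
  hence e2: "dw d r s (a @ t @ b) = dw d r s a @ ?t @ dw d r s b" using e1 by simp
  have "jword d r es (dw d r s a @ ?t @ dw d r s b)" using jword_dw[OF j, of s] e2 by simp
  moreover have "\<forall>x. rho_states d r (dw d r s a @ ?t) x = x" using rho_id_dw[OF rid, of s] e1 by simp
  ultimately show ?thesis using stem_dw[OF a] stem_dw[OF b] by (auto simp: stem_rel_def)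
qed

lemma jungle_ext:
  assumes y: "comp d r y \<in> jungle d r es" "length y > length es"
    and a: "a \<in> stems es" and rid: "\<forall>x. rho_states d r (a @ t) x = x"
  shows "comp d r (a @ t @ y) \<in> jungle d r es"
proof -
  have "comp d r y \<notin> set es" using es_words comp_self y(2) by (metis not_le)
  hence F: "liftable (comp d r y) (last es)" using y(1) by (simp add: jungle_def)
  let ?C = "comp d r (a @ t @ y)"
  have la: "length a = length es" using stem_len[OF a] .
  have "[] \<notin> ?C" using length_comp[of "[]" d r "a @ t @ y"] la y(2) by auto
  hence ed: "is_edge d r ?C" by (auto simp: is_edge_def is_vertex_def)
  have "descends ?C (last es)" unfolding descends_def last_lev
    using comp_self[of "a @ t @ y" d r] la y(2) a by (intro bexI[of _ "a @ t @ y"]) (auto simp: stems_def)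
  moreover have "liftable ?C (last es)" unfolding liftable_def
  proof
    fix z assume "z \<in> ?C"
    then obtain s where z: "z = dw d r s ((a @ t) @ y)" using comp_dw_rev inj_d by (metis append_assoc)
    hence z2: "z = dw d r s (a @ t) @ dw d r s y" using rid by (simp only: dw_append_word)
    have "dw d r s y \<in> comp d r y" by (rule dw_in_comp)
    then obtain p where "suffix p (dw d r s y)" "p \<in> last es" using F by (auto simp: liftable_def)
    thus "\<exists>p. suffix p z \<and> p \<in> last es" using z2 suffix_appendI by blast
  qed
  ultimately show ?thesis using ed by (simp add: jungle_def)
qed

lemma R_trans: assumes "(a, b) \<in> stem_rel d r es" "(b, c) \<in> stem_rel d r es"
  shows "(a, c) \<in> stem_rel d r es"
proof -
  from assms(1) obtain s where a: "a \<in> stems es"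
    and j1: "jword d r es (a @ s @ b)" and r1: "\<forall>x. rho_states d r (a @ s) x = x"
    by (auto simp: stem_rel_def)
  from assms(2) obtain t where b: "b \<in> stems es" and c: "c \<in> stems es"
    and j2: "jword d r es (b @ t @ c)" and r2: "\<forall>x. rho_states d r (b @ t) x = x"
    by (auto simp: stem_rel_def)
  have lb: "length b = length es" using stem_len[OF b] .
  have rr: "\<forall>x. rho_states d r (a @ (s @ b @ t)) x = x"
    using r1 r2 by (metis append_assoc rho_states_append)
  have "jword d r es (a @ (s @ b @ t) @ c)" unfolding jword_def
  proof (intro allI impI)
    fix k assume k: "1 \<le> k \<and> k \<le> length (a @ (s @ b @ t) @ c)"
    show "comp d r (take k (a @ (s @ b @ t) @ c)) \<in> jungle d r es"
    proof (cases "k \<le> length (a @ s @ b)")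
      case True
      hence "take k (a @ (s @ b @ t) @ c) = take k (a @ s @ b)" by simp
      then show ?thesis using j1 k True by (simp add: jword_def)
    next
      case False
      define j where "j = k - length (a @ s)"
      have jn: "j > length es" using False lb by (simp add: j_def)
      have tk: "take k (a @ (s @ b @ t) @ c) = a @ s @ take j (b @ t @ c)"
        using False by (simp add: j_def)
      have jl: "1 \<le> j \<and> j \<le> length (b @ t @ c)" using k jn unfolding j_def by simp linarith
      hence jj: "comp d r (take j (b @ t @ c)) \<in> jungle d r es" using j2 unfolding jword_def by blast
      have lt: "length (take j (b @ t @ c)) > length es" using jl jn by simp
      have "comp d r (a @ s @ take j (b @ t @ c)) \<in> jungle d r es"
        by (rule jungle_ext[OF jj lt a r1])
      then show ?thesis using tk by simp
    qed
  qed
  thus ?thesis using a c rr unfolding stem_rel_def by blast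
qed

lemma R_stems: "(a, b) \<in> stem_rel d r es \<Longrightarrow> a \<in> stems es \<and> b \<in> stems es"
  by (simp add: stem_rel_def)

lemma R_inv_pow: "(a, b) \<in> stem_rel d r es \<Longrightarrow> ((dw d r s ^^ m) a, (dw d r s ^^ m) b) \<in> stem_rel d r es"
  by (induction m) (auto intro: R_inv)

lemma R_sym: assumes ab: "(a, b) \<in> stem_rel d r es" shows "(b, a) \<in> stem_rel d r es"
proof -
  have a: "a \<in> stems es" and b: "b \<in> stems es" using R_stems[OF ab] by auto
  obtain s where bs: "b = dw d r s a" using stem_reach[OF a b] by blast
  let ?h = "dw d r s" and ?A = "{w :: 'q list. length w = length a}"
  have fin: "finite ?A" using finite_lists_length_eq[OF finite_UNIV, of "length a"] by simp
  have "inj ?h" by (rule inj_dw) (rule inj_d)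
  moreover have "?h ` ?A \<subseteq> ?A" by auto
  ultimately obtain N where N: "N > 0" "\<forall>w\<in>?A. (?h ^^ N) w = w"
    using finite_order fin by blast
  have cl: "(?h a, (?h ^^ Suc (Suc j)) a) \<in> stem_rel d r es" for j
  proof (induction j)
    case 0
    have "(?h a, ?h (?h a)) \<in> stem_rel d r es" using R_inv[OF ab[unfolded bs]] by simp
    then show ?case by simp
  next
    case (Suc j)
    have "((?h ^^ Suc (Suc j)) a, (?h ^^ Suc (Suc j)) (?h a)) \<in> stem_rel d r es"
      using R_inv_pow[OF ab[unfolded bs]] by blast
    hence "((?h ^^ Suc (Suc j)) a, (?h ^^ Suc (Suc (Suc j))) a) \<in> stem_rel d r es"
      by (simp only: funpow_Suc_right o_apply)
    then show ?case using Suc R_trans by blast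
  qed
  show ?thesis
  proof (cases "N = 1")
    case True
    hence "b = a" using N bs by simp
    then show ?thesis using ab by simp
  next
    case False
    hence "N = Suc (Suc (N - 2))" using N(1) by simp
    hence "(?h a, (?h ^^ N) a) \<in> stem_rel d r es" using cl by metis
    then show ?thesis using N(2) bs by simp
  qed
qed

lemma stems_finite: "finite (stems es)"
proof -
  have "stems es \<subseteq> {w. length w = length es}" using stem_len by auto
  moreover have "finite {w :: 'q list. length w = length es}"
    using finite_lists_length_eq[OF finite_UNIV, of "length es"] by simp
  ultimately show ?thesis by (rule finite_subset)
qed

lemma count_le:
  assumes v1: "(x, v1) \<in> stem_rel d r es" "prefix u v1"
    and v2: "(x', v2) \<in> stem_rel d r es" "prefix u' v2"
    and len: "length u' = length u"
  shows "M_count u (stem_rel d r es `` {x}) \<le> M_count u' (stem_rel d r es `` {x'})"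
proof -
  let ?R = "stem_rel d r es"
  have s1: "v1 \<in> stems es" and s2: "v2 \<in> stems es" using R_stems v1(1) v2(1) by auto
  obtain s where h: "v2 = dw d r s v1" using stem_reach[OF s1 s2] by blast
  let ?h = "dw d r s"
  obtain w1 where w1: "v1 = u @ w1" using v1(2) by (auto simp: prefix_def)
  obtain w2 where w2: "v2 = u' @ w2" using v2(2) by (auto simp: prefix_def)
  have "v2 = ?h u @ dw d r (rho_states d r u s) w1" using h w1 by (simp add: dw_append_word)
  hence hu: "?h u = u'" using w2 len by (metis append_eq_append_conv length_dw)
  have sub: "?h ` {v \<in> ?R `` {x}. prefix u v} \<subseteq> {v \<in> ?R `` {x'}. prefix u' v}"
  proof
    fix z assume "z \<in> ?h ` {v \<in> ?R `` {x}. prefix u v}"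
    then obtain v where z: "z = ?h v" and xv: "(x, v) \<in> ?R" and pv: "prefix u v" by auto
    have "(v, v1) \<in> ?R" using R_sym[OF xv] v1(1) R_trans by blast
    hence "(z, v2) \<in> ?R" using R_inv z h by blast
    hence "(x', z) \<in> ?R" using v2(1) R_sym R_trans by blast
    moreover obtain w where "v = u @ w" using pv by (auto simp: prefix_def)
    hence "z = u' @ dw d r (rho_states d r u s) w" using z hu by (simp add: dw_append_word)
    ultimately show "z \<in> {v \<in> ?R `` {x'}. prefix u' v}" by (auto simp: prefix_def)
  qed
  have fin: "finite {v \<in> ?R `` {x'}. prefix u' v}"
    using stems_finite R_stems by (auto intro: finite_subset[of _ "stems es"])
  have "inj ?h" by (rule inj_dw) (rule inj_d)
  hence "inj_on ?h {v \<in> ?R `` {x}. prefix u v}" by (rule inj_on_subset) simp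
  thus ?thesis unfolding M_count_def using card_inj_on_le[OF _ sub fin] by blast
qed

end

theorem proposition5p17:
  fixes delta :: "'s::finite \<Rightarrow> 'q::finite \<Rightarrow> 'q"
    and rho :: "'q \<Rightarrow> 's \<Rightarrow> 's"
    and es :: "'q list set list"
  assumes conn: "connected_automaton delta rho"
    and birev: "bireversible delta rho"
    and no_active: "\<And>B. is_branch delta rho B \<Longrightarrow> active_branch delta rho B \<Longrightarrow>
                          \<not> self_liftable delta rho (branch_edges B)"
    and trunk: "jungle_trunk delta rho es"
    and n_def: "n = length es"
    and u: "jword delta rho es u" "length u < n"
    and u': "jword delta rho es u'" "length u' = length u"
    and gamma: "\<gamma> \<in> stems es // stem_rel delta rho es"
    and gamma': "\<gamma>' \<in> stems es // stem_rel delta rho es"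
    and nz: "M_count u \<gamma> \<noteq> 0" "M_count u' \<gamma>' \<noteq> 0"
  shows "M_count u \<gamma> = M_count u' \<gamma>'"
proof -
  interpret ctx delta rho es
    using birev trunk by unfold_locales (auto simp: bireversible_def)
  let ?R = "stem_rel delta rho es"
  obtain x where x: "\<gamma> = ?R `` {x}" using gamma by (auto simp: quotient_def)
  obtain x' where x': "\<gamma>' = ?R `` {x'}" using gamma' by (auto simp: quotient_def)
  obtain v1 where v1: "(x, v1) \<in> ?R" "prefix u v1"
    using nz(1) x unfolding M_count_def by (metis (no_types, lifting) Collect_empty_eq Image_singleton_iff card.empty)
  obtain v2 where v2: "(x', v2) \<in> ?R" "prefix u' v2"
    using nz(2) x' unfolding M_count_def by (metis (no_types, lifting) Collect_empty_eq Image_singleton_iff card.empty)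
  have "M_count u \<gamma> \<le> M_count u' \<gamma>'" using count_le[OF v1 v2 u'(2)] x x' by simp
  moreover have "M_count u' \<gamma>' \<le> M_count u \<gamma>" using count_le[OF v2 v1 u'(2)[symmetric]] x x' by simp
  ultimately show ?thesis by simp
qed

end
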